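(* Let $G=(V,E)$ be a claw-free graph and $I$ a maximum cardinality independent set of $G$. Let $a\in I$ and let $v\in V_a$ be a vertex belonging to a cluster $C$. Then $N[v]\setminus N[a]=C\setminus V_a$.
   Context: Graphs are finite, simple, undirected; claw-free means no induced $K_{1,3}$. For $a\ne b$ in $I$, $V_{a,b}=\{v\in V\setminus I: N(v)\cap I=\{a,b\}\}$ ($2$-packs), and for $a\in I$, $V_a=\{v\in V\setminus I : N(v)\cap I=\{a\}\}$ ($1$-packs). $\mathtt{T2}^a$ is the set of vertices $v\in V_a$ that have neighbours in at least two distinct $1$-packs other than $V_a$; $\mathtt{T2}=\bigcup_{a\in I}\mathtt{T2}^a$. $G_{\mathtt{T2}}$ is the graph on vertex set $\mathtt{T2}$ whose edges are the edges of $G[\mathtt{T2}]$ with endpoints in different $1$-packs. A cluster is the vertex set of a connected component of $G_{\mathtt{T2}}$. *)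

theory Defs
  imports Main
begin

definition graph :: "'a set \<Rightarrow> ('a \<Rightarrow> 'a \<Rightarrow> bool) \<Rightarrow> bool" where
  "graph V E \<longleftrightarrow> finite V \<and> (\<forall>x y. E x y \<longrightarrow> x \<in> V \<and> y \<in> V)
     \<and> (\<forall>x y. E x y \<longrightarrow> E y x) \<and> (\<forall>x. \<not> E x x)"

definition nbhd :: "'a set \<Rightarrow> ('a \<Rightarrow> 'a \<Rightarrow> bool) \<Rightarrow> 'a \<Rightarrow> 'a set" where
  "nbhd V E v = {u \<in> V. E v u}"

definition cnbhd :: "'a set \<Rightarrow> ('a \<Rightarrow> 'a \<Rightarrow> bool) \<Rightarrow> 'a \<Rightarrow> 'a set" where
  "cnbhd V E v = insert v (nbhd V E v)"

definition claw_free :: "'a set \<Rightarrow> ('a \<Rightarrow> 'a \<Rightarrow> bool) \<Rightarrow> bool" where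
  "claw_free V E \<longleftrightarrow> \<not> (\<exists>c\<in>V. \<exists>x\<in>V. \<exists>y\<in>V. \<exists>z\<in>V.
      E c x \<and> E c y \<and> E c z \<and> x \<noteq> y \<and> x \<noteq> z \<and> y \<noteq> z
      \<and> \<not> E x y \<and> \<not> E x z \<and> \<not> E y z)"

definition independent :: "'a set \<Rightarrow> ('a \<Rightarrow> 'a \<Rightarrow> bool) \<Rightarrow> 'a set \<Rightarrow> bool" where
  "independent V E I \<longleftrightarrow> I \<subseteq> V \<and> (\<forall>x\<in>I. \<forall>y\<in>I. \<not> E x y)"

definition max_independent :: "'a set \<Rightarrow> ('a \<Rightarrow> 'a \<Rightarrow> bool) \<Rightarrow> 'a set \<Rightarrow> bool" where
  "max_independent V E I \<longleftrightarrow> independent V E I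
     \<and> (\<forall>J. independent V E J \<longrightarrow> card J \<le> card I)"

definition one_pack :: "'a set \<Rightarrow> ('a \<Rightarrow> 'a \<Rightarrow> bool) \<Rightarrow> 'a set \<Rightarrow> 'a \<Rightarrow> 'a set" where
  "one_pack V E I a = {v \<in> V - I. nbhd V E v \<inter> I = {a}}"

definition T2a :: "'a set \<Rightarrow> ('a \<Rightarrow> 'a \<Rightarrow> bool) \<Rightarrow> 'a set \<Rightarrow> 'a \<Rightarrow> 'a set" where
  "T2a V E I a = {v \<in> one_pack V E I a. \<exists>b\<in>I. \<exists>c\<in>I. b \<noteq> c \<and> b \<noteq> a \<and> c \<noteq> a
      \<and> (\<exists>x\<in>one_pack V E I b. E v x) \<and> (\<exists>y\<in>one_pack V E I c. E v y)}"

definition T2 :: "'a set \<Rightarrow> ('a \<Rightarrow> 'a \<Rightarrow> bool) \<Rightarrow> 'a set \<Rightarrow> 'a set" where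
  "T2 V E I = (\<Union>a\<in>I. T2a V E I a)"

definition ET2 :: "'a set \<Rightarrow> ('a \<Rightarrow> 'a \<Rightarrow> bool) \<Rightarrow> 'a set \<Rightarrow> 'a \<Rightarrow> 'a \<Rightarrow> bool" where
  "ET2 V E I x y \<longleftrightarrow> x \<in> T2 V E I \<and> y \<in> T2 V E I \<and> E x y
     \<and> \<not> (\<exists>a\<in>I. x \<in> one_pack V E I a \<and> y \<in> one_pack V E I a)"

definition cluster :: "'a set \<Rightarrow> ('a \<Rightarrow> 'a \<Rightarrow> bool) \<Rightarrow> 'a set \<Rightarrow> 'a set \<Rightarrow> bool" where
  "cluster V E I C \<longleftrightarrow> (\<exists>x\<in>T2 V E I. C = {y. (ET2 V E I)\<^sup>*\<^sup>* x y})"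

end

theory Submission
  imports Defs
begin

definition SS :: "('a \<Rightarrow> 'a \<Rightarrow> bool) \<Rightarrow> 'a \<Rightarrow> 'a \<Rightarrow> 'a set" where
  "SS E w p = {u. E w u \<and> u \<noteq> p \<and> \<not> E p u}"

context
  fixes V E I
  assumes g: "graph V E" and cf: "claw_free V E" and mi: "max_independent V E I"
begin

lemma sym: "E x y \<Longrightarrow> E y x" using g unfolding graph_def by blast
lemma inV: "E x y \<Longrightarrow> x \<in> V" "E x y \<Longrightarrow> y \<in> V" using g unfolding graph_def by blast+
lemma irr: "\<not> E x x" using g unfolding graph_def by blast
lemma IV: "I \<subseteq> V" using mi unfolding max_independent_def independent_def by blast
lemma Iind: "x \<in> I \<Longrightarrow> y \<in> I \<Longrightarrow> \<not> E x y" using mi unfolding max_independent_def independent_def by blast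

lemma claw:
  assumes "E c x" "E c y" "E c z" "x \<noteq> y" "x \<noteq> z" "y \<noteq> z" "\<not> E x y" "\<not> E x z" "\<not> E y z"
  shows False
  using cf assms inV unfolding claw_free_def by blast

lemma packD:
  assumes "v \<in> one_pack V E I p"
  shows "v \<in> V" "v \<notin> I" "p \<in> I" "E v p" "\<And>q. q \<in> I \<Longrightarrow> E v q \<Longrightarrow> q = p"
proof -
  have h: "v \<in> V" "v \<notin> I" "{u \<in> V. E v u} \<inter> I = {p}" using assms unfolding one_pack_def nbhd_def by auto
  show "v \<in> V" "v \<notin> I" using h by auto
  have "p \<in> {u \<in> V. E v u} \<inter> I" using h(3) by blast
  then show "p \<in> I" "E v p" by auto
  fix q assume "q \<in> I" "E v q"
  hence "q \<in> {u \<in> V. E v u} \<inter> I" using inV by blast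
  then show "q = p" using h(3) by blast
qed

lemma packI:
  assumes "v \<in> V" "v \<notin> I" "p \<in> I" "E v p" "\<And>q. q \<in> I \<Longrightarrow> E v q \<Longrightarrow> q = p"
  shows "v \<in> one_pack V E I p"
proof -
  have "{u \<in> V. E v u} \<inter> I = {p}"
  proof
    show "{u \<in> V. E v u} \<inter> I \<subseteq> {p}" using assms(5) by blast
    show "{p} \<subseteq> {u \<in> V. E v u} \<inter> I" using assms(3,4) IV by blast
  qed
  thus ?thesis using assms(1,2) unfolding one_pack_def nbhd_def by blast
qed

lemma pack_unique: "v \<in> one_pack V E I p \<Longrightarrow> v \<in> one_pack V E I q \<Longrightarrow> p = q"
  using packD(3,4,5) by metis

lemma nadj: "x \<in> one_pack V E I b \<Longrightarrow> q \<in> I \<Longrightarrow> q \<noteq> b \<Longrightarrow> \<not> E x q"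
  using packD(5) by blast

lemma nadj': "x \<in> one_pack V E I b \<Longrightarrow> q \<in> I \<Longrightarrow> q \<noteq> b \<Longrightarrow> \<not> E q x"
  using nadj sym by blast

lemma neqI: "x \<in> one_pack V E I b \<Longrightarrow> q \<in> I \<Longrightarrow> x \<noteq> q"
  using packD(2) by blast

lemma SSI: "E w x \<Longrightarrow> x \<in> one_pack V E I b \<Longrightarrow> p \<in> I \<Longrightarrow> p \<noteq> b \<Longrightarrow> x \<in> SS E w p"
  unfolding SS_def using nadj' neqI by blast

lemma T2aI:
  assumes "u \<in> one_pack V E I d" "b \<in> I" "c \<in> I" "b \<noteq> c" "b \<noteq> d" "c \<noteq> d"
    "x \<in> one_pack V E I b" "E u x" "y \<in> one_pack V E I c" "E u y"
  shows "u \<in> T2a V E I d"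
  unfolding T2a_def using assms by blast

lemma T2aE:
  assumes "w \<in> T2a V E I p"
  obtains b c x y where "b \<in> I" "c \<in> I" "b \<noteq> c" "b \<noteq> p" "c \<noteq> p"
    "x \<in> one_pack V E I b" "E w x" "y \<in> one_pack V E I c" "E w y"
  using assms unfolding T2a_def by blast

lemma T2a_pack: "w \<in> T2a V E I p \<Longrightarrow> w \<in> one_pack V E I p"
  unfolding T2a_def by blast

lemma T2_pack: "v \<in> T2 V E I \<Longrightarrow> \<exists>p. p \<in> I \<and> v \<in> T2a V E I p \<and> v \<in> one_pack V E I p"
  unfolding T2_def using T2a_pack by blast

lemma T2a_in: "v \<in> T2 V E I \<Longrightarrow> v \<in> one_pack V E I p \<Longrightarrow> v \<in> T2a V E I p"
  using T2_pack pack_unique by blast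

lemma SSD: "u \<in> SS E w p \<Longrightarrow> E w u" "u \<in> SS E w p \<Longrightarrow> u \<noteq> p" "u \<in> SS E w p \<Longrightarrow> \<not> E p u"
  unfolding SS_def by auto

lemma clique:
  assumes "w \<in> one_pack V E I p" "x \<in> SS E w p" "y \<in> SS E w p" "x \<noteq> y"
  shows "E x y"
proof (rule ccontr)
  assume n: "\<not> E x y"
  have "E w p" using packD(4)[OF assms(1)] .
  moreover have "p \<noteq> x" "p \<noteq> y" using SSD(2)[OF assms(2)] SSD(2)[OF assms(3)] by auto
  ultimately show False
    using claw[of w p x y] assms(4) n SSD[OF assms(2)] SSD[OF assms(3)] by blast
qed

lemma in_pack:
  assumes "w \<in> one_pack V E I p" "u \<in> SS E w p"
  shows "\<exists>q. q \<in> I \<and> q \<noteq> p \<and> u \<in> one_pack V E I q"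
proof -
  have u: "E w u" "u \<noteq> p" "\<not> E p u" using SSD[OF assms(2)] by auto
  have uV: "u \<in> V" using inV(2)[OF u(1)] .
  have uI: "u \<notin> I" using packD(5)[OF assms(1)] u(1,2) by blast
  have "\<exists>q\<in>I. E u q"
  proof (rule ccontr)
    assume nq: "\<not> (\<exists>q\<in>I. E u q)"
    have ind: "independent V E I" using mi unfolding max_independent_def by blast
    have "independent V E (insert u I)"
      unfolding independent_def
    proof (intro conjI ballI)
      show "insert u I \<subseteq> V" using ind uV unfolding independent_def by blast
      fix x y assume "x \<in> insert u I" "y \<in> insert u I"
      then show "\<not> E x y" using ind irr nq sym unfolding independent_def by blast
    qed
    hence "card (insert u I) \<le> card I" using mi unfolding max_independent_def by blast
    moreover have "finite I" using IV g finite_subset unfolding graph_def by blast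
    ultimately show False using uI by simp
  qed
  then obtain q where q: "q \<in> I" "E u q" by blast
  have qp: "q \<noteq> p" using q(2) u(3) sym by blast
  have "\<And>q'. q' \<in> I \<Longrightarrow> E u q' \<Longrightarrow> q' = q"
  proof (rule ccontr)
    fix q' assume q': "q' \<in> I" "E u q'" "q' \<noteq> q"
    have "q' \<noteq> p" using q'(2) u(3) sym by blast
    hence "\<not> E w q'" using nadj[OF assms(1) q'(1)] by blast
    moreover have "\<not> E w q" using nadj[OF assms(1) q(1) qp] .
    moreover have "\<not> E q q'" using Iind q(1) q'(1) by blast
    moreover have "w \<noteq> q" "w \<noteq> q'" using neqI[OF assms(1)] q(1) q'(1) by auto
    moreover have "E u w" using u(1) sym by blast
    ultimately show False using claw[of u w q q'] q(2) q'(2,3) by blast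
  qed
  hence "u \<in> one_pack V E I q" using packI[OF uV uI q(1,2)] by blast
  thus ?thesis using q qp by blast
qed

lemma SS_T2:
  assumes "w \<in> T2a V E I p" "u \<in> SS E w p"
  shows "u \<in> T2 V E I"
proof -
  have wp: "w \<in> one_pack V E I p" using T2a_pack[OF assms(1)] .
  have pI: "p \<in> I" using packD(3)[OF wp] .
  obtain d where d: "d \<in> I" "d \<noteq> p" "u \<in> one_pack V E I d" using in_pack[OF wp assms(2)] by blast
  obtain b c x y where bc: "b \<in> I" "c \<in> I" "b \<noteq> c" "b \<noteq> p" "c \<noteq> p"
    "x \<in> one_pack V E I b" "E w x" "y \<in> one_pack V E I c" "E w y"
    using T2aE[OF assms(1)] by blast
  have xS: "x \<in> SS E w p" using SSI[OF bc(7) bc(6) pI] bc(4) by blast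
  have yS: "y \<in> SS E w p" using SSI[OF bc(9) bc(8) pI] bc(5) by blast
  have uw: "E u w" using SSD(1)[OF assms(2)] sym by blast
  have "u \<in> T2a V E I d"
  proof (cases "d = b")
    case True
    hence "y \<noteq> u" using d(3) bc(8) bc(3) pack_unique by blast
    hence "E u y" using clique[OF wp assms(2) yS] by blast
    then show ?thesis using T2aI[OF d(3) pI bc(2) _ _ _ wp uw bc(8)] bc(5) d(2) True bc(3) by blast
  next
    case False
    hence "x \<noteq> u" using d(3) bc(6) pack_unique by blast
    hence "E u x" using clique[OF wp assms(2) xS] by blast
    then show ?thesis using T2aI[OF d(3) pI bc(1) _ _ _ wp uw bc(6)] bc(4) d(2) False by blast
  qed
  thus ?thesis unfolding T2_def using d(1) by blast
qed

lemma half: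
  assumes "w \<in> one_pack V E I p" "u \<in> SS E w p" "u \<in> one_pack V E I q"
    "x \<in> SS E w p" "x \<notin> one_pack V E I q"
  shows "x \<in> SS E u q"
proof -
  have "x \<noteq> u" using assms(3,5) by blast
  hence "E u x" using clique[OF assms(1) assms(2) assms(4)] by blast
  moreover obtain r where r: "r \<in> I" "x \<in> one_pack V E I r" using in_pack[OF assms(1,4)] by blast
  moreover have "q \<in> I" using packD(3)[OF assms(3)] .
  moreover have "q \<noteq> r" using r(2) assms(5) by blast
  ultimately show ?thesis using SSI by blast
qed

lemma swap:
  assumes "w \<in> one_pack V E I p" "u \<in> SS E w p" "u \<in> one_pack V E I q"
  shows "SS E w p - one_pack V E I q = SS E u q - one_pack V E I p"
proof -
  have pI: "p \<in> I" using packD(3)[OF assms(1)] .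
  have pq: "p \<noteq> q" using SSD(3)[OF assms(2)] packD(4)[OF assms(3)] sym by blast
  have wS: "w \<in> SS E u q"
    using SSI[OF _ assms(1) packD(3)[OF assms(3)]] SSD(1)[OF assms(2)] sym pq by blast
  have notp: "\<And>x. x \<in> SS E w p \<Longrightarrow> x \<notin> one_pack V E I p"
    using SSD(3) packD(4) sym by blast
  have notq: "\<And>x. x \<in> SS E u q \<Longrightarrow> x \<notin> one_pack V E I q"
    using SSD(3) packD(4) sym by blast
  show ?thesis
  proof
    show "SS E w p - one_pack V E I q \<subseteq> SS E u q - one_pack V E I p"
      using half[OF assms] notp by blast
    show "SS E u q - one_pack V E I p \<subseteq> SS E w p - one_pack V E I q"
      using half[OF assms(3) wS assms(1)] notq by blast
  qed
qed

lemma M: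
  assumes "v \<in> one_pack V E I a" "z \<in> T2a V E I a"
    "SS E v a - one_pack V E I d = SS E z a - one_pack V E I d"
    "u \<in> SS E v a" "u \<in> one_pack V E I d"
  shows "u \<in> SS E z a"
proof -
  have zp: "z \<in> one_pack V E I a" using T2a_pack[OF assms(2)] .
  have aI: "a \<in> I" using packD(3)[OF zp] .
  obtain b c x y where bc: "b \<in> I" "c \<in> I" "b \<noteq> c" "b \<noteq> a" "c \<noteq> a"
    "x \<in> one_pack V E I b" "E z x" "y \<in> one_pack V E I c" "E z y"
    using T2aE[OF assms(2)] by blast
  have "\<exists>e t. e \<in> I \<and> e \<noteq> a \<and> e \<noteq> d \<and> t \<in> one_pack V E I e \<and> E z t"
  proof (cases "b = d")
    case True then show ?thesis using bc(2,3,5,8,9) by blast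
  next
    case False then show ?thesis using bc(1,4,6,7) by blast
  qed
  then obtain e t where et: "e \<in> I" "e \<noteq> a" "e \<noteq> d" "t \<in> one_pack V E I e" "E z t"
    by blast
  have tS: "t \<in> SS E z a" using SSI[OF et(5) et(4) aI] et(2) by blast
  have "t \<notin> one_pack V E I d" using et(3,4) pack_unique by blast
  hence tS': "t \<in> SS E v a" using tS assms(3) by blast
  have "t \<noteq> u" using et(3,4) assms(5) pack_unique by blast
  hence tu: "E t u" using clique[OF assms(1) tS' assms(4)] by blast
  have dI: "d \<in> I" using packD(3)[OF assms(5)] .
  have da: "d \<noteq> a" using SSD(3)[OF assms(4)] packD(4)[OF assms(5)] sym by blast
  have zu: "E z u"
  proof (rule ccontr)
    assume nz: "\<not> E z u"
    have "\<not> E e z" using nadj'[OF zp et(1,2)] .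
    moreover have "\<not> E e u" using nadj'[OF assms(5) et(1,3)] .
    moreover have "e \<noteq> z" using neqI[OF zp et(1)] by blast
    moreover have "e \<noteq> u" using neqI[OF assms(5) et(1)] by blast
    moreover have "z \<noteq> u" using zp assms(5) pack_unique da by blast
    moreover have "E t e" using packD(4)[OF et(4)] .
    moreover have "E t z" using et(5) sym by blast
    ultimately show False using claw[of t e z u] tu nz by blast
  qed
  thus ?thesis using SSD(2,3)[OF assms(4)] unfolding SS_def by blast
qed

lemma inv:
  assumes "v \<in> T2a V E I a" "(ET2 V E I)\<^sup>*\<^sup>* v w"
  shows "w \<in> SS E v a \<or> (w \<in> one_pack V E I a \<and> SS E w a = SS E v a)"
  using assms(2)
proof (induction rule: rtranclp_induct)
  case base
  then show ?case using T2a_pack[OF assms(1)] by blast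
next
  case (step w z)
  have R: "z \<in> T2 V E I" "E w z" "\<not> (\<exists>a\<in>I. w \<in> one_pack V E I a \<and> z \<in> one_pack V E I a)"
    using step(2) unfolding ET2_def by auto
  obtain e where e: "e \<in> I" "z \<in> one_pack V E I e" using T2_pack[OF R(1)] by blast
  have vp: "v \<in> one_pack V E I a" using T2a_pack[OF assms(1)] .
  have aI: "a \<in> I" using packD(3)[OF vp] .
  from step(3) show ?case
  proof
    assume A: "w \<in> one_pack V E I a \<and> SS E w a = SS E v a"
    have "e \<noteq> a" using A R(3) e by blast
    hence "z \<in> SS E w a" using SSI[OF R(2) e(2) aI] by blast
    thus ?case using A by blast
  next
    assume B: "w \<in> SS E v a"
    obtain d where d: "d \<in> I" "d \<noteq> a" "w \<in> one_pack V E I d" using in_pack[OF vp B] by blast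
    have ed: "e \<noteq> d" using R(3) e d by blast
    have zS: "z \<in> SS E w d" using SSI[OF R(2) e(2) d(1)] ed by blast
    have eq1: "SS E v a - one_pack V E I d = SS E w d - one_pack V E I a"
      using swap[OF vp B d(3)] .
    show ?case
    proof (cases "e = a")
      case False
      hence "z \<notin> one_pack V E I a" using e(2) pack_unique by blast
      hence "z \<in> SS E v a" using zS eq1 by blast
      thus ?thesis by blast
    next
      case True
      hence za: "z \<in> one_pack V E I a" using e by simp
      have eq2: "SS E w d - one_pack V E I a = SS E z a - one_pack V E I d"
        using swap[OF d(3) zS za] .
      have eq: "SS E v a - one_pack V E I d = SS E z a - one_pack V E I d" using eq1 eq2 by simp
      have zT: "z \<in> T2a V E I a" using T2a_in[OF R(1) za] .
      have "SS E z a = SS E v a"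
      proof
        show "SS E v a \<subseteq> SS E z a"
        proof
          fix x assume x: "x \<in> SS E v a"
          show "x \<in> SS E z a"
          proof (cases "x \<in> one_pack V E I d")
            case True then show ?thesis using M[OF vp zT eq x] by blast
          next
            case False then show ?thesis using eq x by blast
          qed
        qed
        show "SS E z a \<subseteq> SS E v a"
        proof
          fix x assume x: "x \<in> SS E z a"
          show "x \<in> SS E v a"
          proof (cases "x \<in> one_pack V E I d")
            case True then show ?thesis using M[OF za assms(1) eq[symmetric] x] by blast
          next
            case False then show ?thesis using eq x by blast
          qed
        qed
      qed
      thus ?thesis using za by blast
    qed
  qed
qed

lemma ET2_sym: "ET2 V E I x y \<Longrightarrow> ET2 V E I y x"
  unfolding ET2_def using sym by blast

lemma rt_sym: "(ET2 V E I)\<^sup>*\<^sup>* x y \<Longrightarrow> (ET2 V E I)\<^sup>*\<^sup>* y x"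
proof (induction rule: rtranclp_induct)
  case base then show ?case by simp
next
  case (step y z) then show ?case
    using ET2_sym converse_rtranclp_into_rtranclp by metis
qed

end

theorem corollary1:
  assumes "graph V E"
    and "claw_free V E"
    and "max_independent V E I"
    and "a \<in> I"
    and "v \<in> one_pack V E I a"
    and "cluster V E I C"
    and "v \<in> C"
  shows "cnbhd V E v - cnbhd V E a = C - one_pack V E I a"
proof -
  note ctx = assms(1-3)
  obtain x where x: "x \<in> T2 V E I" "C = {y. (ET2 V E I)\<^sup>*\<^sup>* x y}"
    using assms(6) unfolding cluster_def by blast
  have xv: "(ET2 V E I)\<^sup>*\<^sup>* x v" using x assms(7) by blast
  have vT: "v \<in> T2 V E I"
  proof (cases "x = v")
    case True then show ?thesis using x by simp
  next
    case False
    then obtain w where "(ET2 V E I) w v" using xv by (metis rtranclp.cases)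
    then show ?thesis unfolding ET2_def by blast
  qed
  have vTa: "v \<in> T2a V E I a" using T2a_in[OF ctx vT assms(5)] .
  have C: "C = {y. (ET2 V E I)\<^sup>*\<^sup>* v y}"
  proof -
    have vx: "(ET2 V E I)\<^sup>*\<^sup>* v x" using rt_sym[OF ctx xv] .
    have "\<And>y. (ET2 V E I)\<^sup>*\<^sup>* x y \<longleftrightarrow> (ET2 V E I)\<^sup>*\<^sup>* v y"
    proof
      fix y assume "(ET2 V E I)\<^sup>*\<^sup>* x y" thus "(ET2 V E I)\<^sup>*\<^sup>* v y" using rtranclp_trans[OF vx] by blast
    next
      fix y assume "(ET2 V E I)\<^sup>*\<^sup>* v y" thus "(ET2 V E I)\<^sup>*\<^sup>* x y" using rtranclp_trans[OF xv] by blast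
    qed
    thus ?thesis using x(2) by simp
  qed
  have va: "E a v" using packD(4)[OF ctx assms(5)] sym[OF ctx] by blast
  have L: "cnbhd V E v - cnbhd V E a = SS E v a"
    using va inV[OF ctx] unfolding cnbhd_def nbhd_def SS_def by auto
  have "SS E v a = C - one_pack V E I a"
  proof
    show "SS E v a \<subseteq> C - one_pack V E I a"
    proof
      fix u assume u: "u \<in> SS E v a"
      have uT: "u \<in> T2 V E I" using SS_T2[OF ctx vTa u] .
      obtain q where q: "q \<in> I" "q \<noteq> a" "u \<in> one_pack V E I q"
        using in_pack[OF ctx assms(5) u] by blast
      have "\<not> (\<exists>b\<in>I. v \<in> one_pack V E I b \<and> u \<in> one_pack V E I b)"
        using pack_unique[OF ctx] assms(5) q by blast
      hence "ET2 V E I v u" using vT uT u unfolding ET2_def SS_def by blast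
      hence "u \<in> C" using C by auto
      moreover have "u \<notin> one_pack V E I a" using q pack_unique[OF ctx] by blast
      ultimately show "u \<in> C - one_pack V E I a" by blast
    qed
    show "C - one_pack V E I a \<subseteq> SS E v a"
      using inv[OF ctx vTa] C by blast
  qed
  thus ?thesis using L by simp
qed

end
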